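(* Let $f:\mathbb F_2^6\to\mathbb F_2$ be $f(x_1,\dots,x_6)=(x_2\oplus x_2x_5\oplus x_4x_5)x_6\oplus x_3x_5(1\oplus x_6)\oplus x_1(1\oplus x_5)(1\oplus x_6)$. Let $r\ge6$ be even, $n=r+2$. (i) Let $h_1,h_2,h_3,h_4:\mathbb F_2^r\to\mathbb F_2$ be plateaued functions with pairwise disjoint Walsh supports, where $h_1,h_2,h_3$ are $2$-plateaued and $h_4$ is $4$-plateaued, and let $\mathfrak f(x,y)=f(h_1(x),h_2(x),h_3(x),h_4(x),y_1,y_2)$ for $(x,y)\in\mathbb F_2^r\times\mathbb F_2^2$. Then $W_{\mathfrak f}(u,v)\in\{0,\pm2^{n/2},\pm2^{(n+2)/2}\}$ for all $(u,v)$. (ii) For $i=1,\dots,4$ let $h_{1,i},h_{2,i},h_{3,i},h_{4,i}:\mathbb F_2^r\to\mathbb F_2$ satisfy the hypotheses of (i) (for each fixed $i$), and let $\mathfrak f_i(x,y)=f(h_{1,i}(x),\dots,h_{4,i}(x),y_1,y_2)$. Assume further that $h_{4,1},\dots,h_{4,4}$ have pairwise disjoint Walsh supports, and that for each $p\in\{1,2,3\}$: $S_{h_{p,1}}=S_{h_{p,2}}=S_{h_{p,3}}=S_{h_{p,4}}$ and $h^*_{p,1}\oplus h^*_{p,2}\oplus h^*_{p,3}\oplus h^*_{p,4}=1$ on this common support. Then: (a) the sets $S^{[1]}_{\mathfrak f_i}=\{w\in\mathbb F_2^n:|W_{\mathfrak f_i}(w)|=2^{(n+2)/2}\}$, $i=1,\dots,4$,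 are pairwise disjoint; (b) the sets $S^{[2]}_{\mathfrak f_i}=\{w:|W_{\mathfrak f_i}(w)|=2^{n/2}\}$ are all equal to a common set $S$, and the functions $\mathfrak f^*_{[2],i}:S\to\mathbb F_2$ defined by $W_{\mathfrak f_i}(w)=2^{n/2}(-1)^{\mathfrak f^*_{[2],i}(w)}$ satisfy $\mathfrak f^*_{[2],1}\oplus\dots\oplus\mathfrak f^*_{[2],4}=1$ on $S$. *)

theory Defs
  imports Main
begin

text \<open>Vectors of F_2^m are represented as boolean lists of length m
  (True = 1, False = 0); XOR on F_2 is inequality on bool.\<close>

definition vecs :: "nat \<Rightarrow> bool list set" where
  "vecs m = {xs. length xs = m}"

definition bxor :: "bool \<Rightarrow> bool \<Rightarrow> bool" (infixl "\<oplus>" 65) where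
  "a \<oplus> b \<longleftrightarrow> a \<noteq> b"

definition dotp :: "bool list \<Rightarrow> bool list \<Rightarrow> bool" where
  "dotp u x \<longleftrightarrow> odd (card {i. i < length u \<and> u ! i \<and> x ! i})"

definition walsh :: "nat \<Rightarrow> (bool list \<Rightarrow> bool) \<Rightarrow> bool list \<Rightarrow> int" where
  "walsh m h u = (\<Sum>x\<in>vecs m. (-1) ^ of_bool (h x \<oplus> dotp u x))"

definition wsupp :: "nat \<Rightarrow> (bool list \<Rightarrow> bool) \<Rightarrow> bool list set" where
  "wsupp m h = {u \<in> vecs m. walsh m h u \<noteq> 0}"

definition plateaued :: "nat \<Rightarrow> nat \<Rightarrow> (bool list \<Rightarrow> bool) \<Rightarrow> bool" where
  "plateaued m s h \<longleftrightarrow> (\<forall>u\<in>vecs m. walsh m h u \<in> {0, 2 ^ ((m + s) div 2), - (2 ^ ((m + s) div 2))})"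

text \<open>Dual h^* on the support, given by W_h(u) = A (-1)^(h^*(u)) with A > 0,
  i.e. h^*(u) = 1 iff W_h(u) < 0.\<close>
definition wdual :: "nat \<Rightarrow> (bool list \<Rightarrow> bool) \<Rightarrow> bool list \<Rightarrow> bool" where
  "wdual m h u \<longleftrightarrow> walsh m h u < 0"

definition f6 :: "bool \<Rightarrow> bool \<Rightarrow> bool \<Rightarrow> bool \<Rightarrow> bool \<Rightarrow> bool \<Rightarrow> bool" where
  "f6 x1 x2 x3 x4 x5 x6 =
     (((x2 \<oplus> (x2 \<and> x5) \<oplus> (x4 \<and> x5)) \<and> x6) \<oplus> (x3 \<and> x5 \<and> (True \<oplus> x6))
       \<oplus> (x1 \<and> (True \<oplus> x5) \<and> (True \<oplus> x6)))"

text \<open>The composite frak f(x,y) = f(h1 x, h2 x, h3 x, h4 x, y1, y2) on F_2^(r+2),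
  with w = x @ [y1, y2].\<close>
definition compose_f :: "nat \<Rightarrow> (bool list \<Rightarrow> bool) \<Rightarrow> (bool list \<Rightarrow> bool) \<Rightarrow>
    (bool list \<Rightarrow> bool) \<Rightarrow> (bool list \<Rightarrow> bool) \<Rightarrow> bool list \<Rightarrow> bool" where
  "compose_f r h1 h2 h3 h4 w =
     (let x = take r w in f6 (h1 x) (h2 x) (h3 x) (h4 x) (w ! r) (w ! (r + 1)))"

definition hyp_i :: "nat \<Rightarrow> (bool list \<Rightarrow> bool) \<Rightarrow> (bool list \<Rightarrow> bool) \<Rightarrow>
    (bool list \<Rightarrow> bool) \<Rightarrow> (bool list \<Rightarrow> bool) \<Rightarrow> bool" where
  "hyp_i r h1 h2 h3 h4 \<longleftrightarrow>
     plateaued r 2 h1 \<and> plateaued r 2 h2 \<and> plateaued r 2 h3 \<and> plateaued r 4 h4 \<and>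
     (\<forall>a\<in>{1..4::nat}. \<forall>b\<in>{1..4::nat}. a \<noteq> b \<longrightarrow>
        wsupp r ([h1, h2, h3, h4] ! (a - 1)) \<inter> wsupp r ([h1, h2, h3, h4] ! (b - 1)) = {})"

end

theory Submission
  imports Defs
begin

definition sg :: "bool \<Rightarrow> int" where "sg b = (if b then -1 else 1)"

lemma finite_vecs: "finite (vecs m)"
proof -
  have "vecs m = {xs. set xs \<subseteq> UNIV \<and> length xs = m}" by (simp add: vecs_def)
  thus ?thesis using finite_lists_length_eq[of "UNIV::bool set" m] by simp
qed

lemma vecs_Suc: "vecs (Suc m) = (\<lambda>x. x @ [False]) ` vecs m \<union> (\<lambda>x. x @ [True]) ` vecs m"
proof (rule set_eqI)
  fix y
  show "y \<in> vecs (Suc m) \<longleftrightarrow> y \<in> (\<lambda>x. x @ [False]) ` vecs m \<union> (\<lambda>x. x @ [True]) ` vecs m"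
  proof
    assume "y \<in> vecs (Suc m)"
    then have l: "length y = Suc m" by (simp add: vecs_def)
    then obtain x a where y: "y = x @ [a]" by (metis length_Suc_conv_rev)
    with l have "x \<in> vecs m" by (simp add: vecs_def)
    with y show "y \<in> (\<lambda>x. x @ [False]) ` vecs m \<union> (\<lambda>x. x @ [True]) ` vecs m"
      by (cases a) auto
  qed (auto simp: vecs_def)
qed

lemma sum_vecs_Suc:
  "(\<Sum>y\<in>vecs (Suc m). (g y::int)) = (\<Sum>x\<in>vecs m. g (x @ [False]) + g (x @ [True]))"
proof -
  have d: "(\<lambda>x. x @ [False]) ` vecs m \<inter> (\<lambda>x. x @ [True]) ` vecs m = {}" by auto
  have i1: "inj_on (\<lambda>x. x @ [False]) (vecs m)" by (auto simp: inj_on_def)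
  have i2: "inj_on (\<lambda>x. x @ [True]) (vecs m)" by (auto simp: inj_on_def)
  show ?thesis
    unfolding vecs_Suc
    by (simp add: sum.union_disjoint[OF _ _ d] finite_vecs sum.reindex[OF i1] sum.reindex[OF i2]
        sum.distrib)
qed

lemma dotp_snoc:
  assumes "length u = length x"
  shows "dotp (u @ [c]) (x @ [a]) = (dotp u x \<oplus> (c \<and> a))"
proof -
  let ?n = "length u"
  have e: "{i. i < length (u @ [c]) \<and> (u @ [c]) ! i \<and> (x @ [a]) ! i}
     = {i. i < ?n \<and> u ! i \<and> x ! i} \<union> (if c \<and> a then {?n} else {})"
    using assms by (auto simp: nth_append less_Suc_eq split: if_splits)
  have f: "finite {i. i < ?n \<and> u ! i \<and> x ! i}" by simp
  show ?thesis unfolding dotp_def e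
    by (cases "c \<and> a") (auto simp: card_insert_if f bxor_def)
qed

lemma walsh_comp:
  assumes "length u = r"
  shows "walsh (r+2) (compose_f r h1 h2 h3 h4) (u @ [c, d]) =
     walsh r h1 u + sg c * walsh r h3 u + sg d * walsh r h2 u + sg c * sg d * walsh r h4 u"
proof -
  define t where "t = (\<lambda>h x. (-1::int) ^ of_bool (h x \<oplus> dotp u x))"
  define G where "G = (\<lambda>y. (-1::int) ^ of_bool (compose_f r h1 h2 h3 h4 y \<oplus> dotp (u @ [c, d]) y))"
  have step: "\<And>x. x \<in> vecs r \<Longrightarrow>
     G (x @ [False, False]) + G (x @ [False, True]) + (G (x @ [True, False]) + G (x @ [True, True]))
   = t h1 x + sg c * t h3 x + sg d * t h2 x + sg c * sg d * t h4 x"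
  proof -
    fix x assume "x \<in> vecs r"
    then have lx: "length x = r" by (simp add: vecs_def)
    have dp: "\<And>a b. dotp (u @ [c, d]) (x @ [a, b]) = (dotp u x \<oplus> (c \<and> a) \<oplus> (d \<and> b))"
    proof -
      fix a b
      have "dotp (u @ [c, d]) (x @ [a, b]) = dotp ((u @ [c]) @ [d]) ((x @ [a]) @ [b])" by simp
      also have "\<dots> = (dotp u x \<oplus> (c \<and> a) \<oplus> (d \<and> b))"
        using assms lx dotp_snoc[of "u@[c]" "x@[a]" d b] dotp_snoc[of u x c a] by simp
      finally show "dotp (u @ [c, d]) (x @ [a, b]) = (dotp u x \<oplus> (c \<and> a) \<oplus> (d \<and> b))" .
    qed
    have cf: "\<And>a b. compose_f r h1 h2 h3 h4 (x @ [a, b]) = f6 (h1 x) (h2 x) (h3 x) (h4 x) a b"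
      using lx by (simp add: compose_f_def nth_append)
    show "?thesis x"
      using dp cf
      by (simp add: G_def t_def sg_def f6_def bxor_def)
  qed
  have "walsh (r+2) (compose_f r h1 h2 h3 h4) (u @ [c, d]) =
     (\<Sum>x\<in>vecs r. t h1 x + sg c * t h3 x + sg d * t h2 x + sg c * sg d * t h4 x)"
    unfolding walsh_def G_def[symmetric]
    by (simp add: sum_vecs_Suc[where m="Suc r"] sum_vecs_Suc[where m=r] step cong: sum.cong)
  also have "\<dots> = walsh r h1 u + sg c * walsh r h3 u + sg d * walsh r h2 u + sg c * sg d * walsh r h4 u"
    by (simp add: walsh_def t_def sum.distrib sum_distrib_left)
  finally show ?thesis .
qed

lemma arith_core:
  fixes A B C D P :: int
  assumes P: "P > 0" and A: "A \<in> {0, P, -P}" and B: "B \<in> {0, P, -P}" and C: "C \<in> {0, P, -P}"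
    and D: "D \<in> {0, 2*P, -(2*P)}"
    and dA: "A \<noteq> 0 \<Longrightarrow> B = 0 \<and> C = 0 \<and> D = 0"
    and dB: "B \<noteq> 0 \<Longrightarrow> C = 0 \<and> D = 0"
    and dC: "C \<noteq> 0 \<Longrightarrow> D = 0"
    and W: "W = A + sg c * C + sg d * B + sg c * sg d * D"
  shows "W \<in> {0, P, -P, 2*P, -(2*P)}
    \<and> (\<bar>W\<bar> = 2*P \<longleftrightarrow> D \<noteq> 0)
    \<and> (\<bar>W\<bar> = P \<longleftrightarrow> A \<noteq> 0 \<or> B \<noteq> 0 \<or> C \<noteq> 0)
    \<and> (A \<noteq> 0 \<longrightarrow> (W < 0 \<longleftrightarrow> A < 0))
    \<and> (B \<noteq> 0 \<longrightarrow> (W < 0 \<longleftrightarrow> (d \<oplus> (B < 0))))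
    \<and> (C \<noteq> 0 \<longrightarrow> (W < 0 \<longleftrightarrow> (c \<oplus> (C < 0))))"
proof -
  have "(A = P \<or> A = -P) \<and> B = 0 \<and> C = 0 \<and> D = 0
    \<or> A = 0 \<and> (B = P \<or> B = -P) \<and> C = 0 \<and> D = 0
    \<or> A = 0 \<and> B = 0 \<and> (C = P \<or> C = -P) \<and> D = 0
    \<or> A = 0 \<and> B = 0 \<and> C = 0 \<and> (D = 2*P \<or> D = -(2*P))
    \<or> A = 0 \<and> B = 0 \<and> C = 0 \<and> D = 0"
    using A B C D dA dB dC by (metis insertE singletonD)
  then show ?thesis using P unfolding W
    by (elim disjE conjE; cases c; cases d; auto simp: sg_def bxor_def)
qed

lemma comp_props:
  assumes hyp: "hyp_i r h1 h2 h3 h4" and lu: "length u = r"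
  shows "walsh (r+2) (compose_f r h1 h2 h3 h4) (u @ [c,d]) \<in> {0, 2^((r+2) div 2), -(2^((r+2) div 2)), 2*2^((r+2) div 2), -(2*2^((r+2) div 2))}
    \<and> (\<bar>walsh (r+2) (compose_f r h1 h2 h3 h4) (u @ [c,d])\<bar> = 2*2^((r+2) div 2) \<longleftrightarrow> walsh r h4 u \<noteq> 0)
    \<and> (\<bar>walsh (r+2) (compose_f r h1 h2 h3 h4) (u @ [c,d])\<bar> = 2^((r+2) div 2) \<longleftrightarrow> walsh r h1 u \<noteq> 0 \<or> walsh r h2 u \<noteq> 0 \<or> walsh r h3 u \<noteq> 0)
    \<and> (walsh r h1 u \<noteq> 0 \<longrightarrow> (walsh (r+2) (compose_f r h1 h2 h3 h4) (u @ [c,d]) < 0 \<longleftrightarrow> walsh r h1 u < 0))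
    \<and> (walsh r h2 u \<noteq> 0 \<longrightarrow> (walsh (r+2) (compose_f r h1 h2 h3 h4) (u @ [c,d]) < 0 \<longleftrightarrow> (d \<oplus> (walsh r h2 u < 0))))
    \<and> (walsh r h3 u \<noteq> 0 \<longrightarrow> (walsh (r+2) (compose_f r h1 h2 h3 h4) (u @ [c,d]) < 0 \<longleftrightarrow> (c \<oplus> (walsh r h3 u < 0))))"
proof -
  have uv: "u \<in> vecs r" using lu by (simp add: vecs_def)
  from hyp have p1: "plateaued r 2 h1" and p2: "plateaued r 2 h2" and p3: "plateaued r 2 h3"
    and p4: "plateaued r 4 h4"
    and disj: "\<forall>a\<in>{1..4::nat}. \<forall>b\<in>{1..4::nat}. a \<noteq> b \<longrightarrow>
        wsupp r ([h1, h2, h3, h4] ! (a - 1)) \<inter> wsupp r ([h1, h2, h3, h4] ! (b - 1)) = {}"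
    unfolding hyp_i_def by auto
  have e4: "(r + 4) div 2 = Suc ((r + 2) div 2)" by simp
  have A: "walsh r h1 u \<in> {0, 2^((r+2) div 2), -(2^((r+2) div 2))}" using p1 uv unfolding plateaued_def by blast
  have B: "walsh r h2 u \<in> {0, 2^((r+2) div 2), -(2^((r+2) div 2))}" using p2 uv unfolding plateaued_def by blast
  have C: "walsh r h3 u \<in> {0, 2^((r+2) div 2), -(2^((r+2) div 2))}" using p3 uv unfolding plateaued_def by blast
  have D: "walsh r h4 u \<in> {0, 2*2^((r+2) div 2), -(2*2^((r+2) div 2))}"
    using p4 uv unfolding plateaued_def e4 by (simp add: numeral_eq_Suc)
  have s12: "wsupp r h1 \<inter> wsupp r h2 = {}" using disj[rule_format, of 1 2] by simp
  have s13: "wsupp r h1 \<inter> wsupp r h3 = {}" using disj[rule_format, of 1 3] by simp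
  have s14: "wsupp r h1 \<inter> wsupp r h4 = {}" using disj[rule_format, of 1 4] by simp
  have s23: "wsupp r h2 \<inter> wsupp r h3 = {}" using disj[rule_format, of 2 3] by simp
  have s24: "wsupp r h2 \<inter> wsupp r h4 = {}" using disj[rule_format, of 2 4] by simp
  have s34: "wsupp r h3 \<inter> wsupp r h4 = {}" using disj[rule_format, of 3 4] by simp
  show ?thesis
    apply (rule arith_core[OF _ A B C D _ _ _ walsh_comp[OF lu]])
    using s12 s13 s14 s23 s24 s34 uv by (auto simp: wsupp_def)
qed

lemma split_vec:
  assumes "w \<in> vecs (r+2)" shows "\<exists>u c d. length u = r \<and> w = u @ [c, d]"
proof -
  have "length w = Suc (Suc r)" using assms by (simp add: vecs_def)
  then obtain v d where v: "w = v @ [d]" "length v = Suc r" by (metis length_Suc_conv_rev)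
  then obtain u c where "v = u @ [c]" "length u = r" by (metis length_Suc_conv_rev)
  with v show ?thesis by auto
qed

theorem mainTheorem8:
  fixes r :: nat
  assumes "r \<ge> 6" and "even r"
  shows
   "(\<forall>h1 h2 h3 h4. hyp_i r h1 h2 h3 h4 \<longrightarrow>
       (\<forall>w\<in>vecs (r + 2). walsh (r + 2) (compose_f r h1 h2 h3 h4) w \<in>
          {0, 2 ^ ((r + 2) div 2), - (2 ^ ((r + 2) div 2)),
           2 ^ ((r + 4) div 2), - (2 ^ ((r + 4) div 2))}))
    \<and>
    (\<forall>H :: nat \<Rightarrow> nat \<Rightarrow> (bool list \<Rightarrow> bool).
       ((\<forall>i\<in>{1..4}. hyp_i r (H 1 i) (H 2 i) (H 3 i) (H 4 i))
        \<and> (\<forall>i\<in>{1..4}. \<forall>j\<in>{1..4}. i \<noteq> j \<longrightarrow> wsupp r (H 4 i) \<inter> wsupp r (H 4 j) = {})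
        \<and> (\<forall>p\<in>{1..3}. (\<forall>i\<in>{1..4}. wsupp r (H p i) = wsupp r (H p 1))
             \<and> (\<forall>u\<in>wsupp r (H p 1).
                 wdual r (H p 1) u \<oplus> wdual r (H p 2) u \<oplus> wdual r (H p 3) u \<oplus> wdual r (H p 4) u)))
       \<longrightarrow>
       (let n = r + 2;
            F = (\<lambda>i. compose_f r (H 1 i) (H 2 i) (H 3 i) (H 4 i));
            S1 = (\<lambda>i. {w\<in>vecs n. \<bar>walsh n (F i) w\<bar> = 2 ^ ((n + 2) div 2)});
            S2 = (\<lambda>i. {w\<in>vecs n. \<bar>walsh n (F i) w\<bar> = 2 ^ (n div 2)})
        in (\<forall>i\<in>{1..4}. \<forall>j\<in>{1..4}. i \<noteq> j \<longrightarrow> S1 i \<inter> S1 j = {})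
           \<and> (\<exists>S. (\<forall>i\<in>{1..4}. S2 i = S)
                \<and> (\<forall>w\<in>S. wdual n (F 1) w \<oplus> wdual n (F 2) w \<oplus> wdual n (F 3) w \<oplus> wdual n (F 4) w))))"
proof -
  have e4: "(r + 4) div 2 = Suc ((r + 2) div 2)" "(r + 2 + 2) div 2 = Suc ((r + 2) div 2)" by simp_all
  have part1: "\<forall>h1 h2 h3 h4. hyp_i r h1 h2 h3 h4 \<longrightarrow>
       (\<forall>w\<in>vecs (r + 2). walsh (r + 2) (compose_f r h1 h2 h3 h4) w \<in>
          {0, 2 ^ ((r + 2) div 2), - (2 ^ ((r + 2) div 2)),
           2 ^ ((r + 4) div 2), - (2 ^ ((r + 4) div 2))})"
  proof (intro allI impI ballI)
    fix h1 h2 h3 h4 w assume hyp: "hyp_i r h1 h2 h3 h4" and w: "w \<in> vecs (r + 2)"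
    obtain u c d where "length u = r" "w = u @ [c, d]" using split_vec[OF w] by blast
    then show "walsh (r + 2) (compose_f r h1 h2 h3 h4) w \<in>
          {0, 2 ^ ((r + 2) div 2), - (2 ^ ((r + 2) div 2)),
           2 ^ ((r + 4) div 2), - (2 ^ ((r + 4) div 2))}"
      using comp_props[OF hyp, of u c d] unfolding e4 by auto
  qed
  have part2: "\<forall>H :: nat \<Rightarrow> nat \<Rightarrow> (bool list \<Rightarrow> bool).
       ((\<forall>i\<in>{1..4}. hyp_i r (H 1 i) (H 2 i) (H 3 i) (H 4 i))
        \<and> (\<forall>i\<in>{1..4}. \<forall>j\<in>{1..4}. i \<noteq> j \<longrightarrow> wsupp r (H 4 i) \<inter> wsupp r (H 4 j) = {})
        \<and> (\<forall>p\<in>{1..3}. (\<forall>i\<in>{1..4}. wsupp r (H p i) = wsupp r (H p 1))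
             \<and> (\<forall>u\<in>wsupp r (H p 1).
                 wdual r (H p 1) u \<oplus> wdual r (H p 2) u \<oplus> wdual r (H p 3) u \<oplus> wdual r (H p 4) u)))
       \<longrightarrow>
       (let n = r + 2;
            F = (\<lambda>i. compose_f r (H 1 i) (H 2 i) (H 3 i) (H 4 i));
            S1 = (\<lambda>i. {w\<in>vecs n. \<bar>walsh n (F i) w\<bar> = 2 ^ ((n + 2) div 2)});
            S2 = (\<lambda>i. {w\<in>vecs n. \<bar>walsh n (F i) w\<bar> = 2 ^ (n div 2)})
        in (\<forall>i\<in>{1..4}. \<forall>j\<in>{1..4}. i \<noteq> j \<longrightarrow> S1 i \<inter> S1 j = {})
           \<and> (\<exists>S. (\<forall>i\<in>{1..4}. S2 i = S)
                \<and> (\<forall>w\<in>S. wdual n (F 1) w \<oplus> wdual n (F 2) w \<oplus> wdual n (F 3) w \<oplus> wdual n (F 4) w)))"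
  proof (intro allI impI)
    fix H :: "nat \<Rightarrow> nat \<Rightarrow> (bool list \<Rightarrow> bool)"
    assume hy: "(\<forall>i\<in>{1..4}. hyp_i r (H 1 i) (H 2 i) (H 3 i) (H 4 i))
        \<and> (\<forall>i\<in>{1..4}. \<forall>j\<in>{1..4}. i \<noteq> j \<longrightarrow> wsupp r (H 4 i) \<inter> wsupp r (H 4 j) = {})
        \<and> (\<forall>p\<in>{1..3}. (\<forall>i\<in>{1..4}. wsupp r (H p i) = wsupp r (H p 1))
             \<and> (\<forall>u\<in>wsupp r (H p 1).
                 wdual r (H p 1) u \<oplus> wdual r (H p 2) u \<oplus> wdual r (H p 3) u \<oplus> wdual r (H p 4) u))"
    define F where "F = (\<lambda>i. compose_f r (H 1 i) (H 2 i) (H 3 i) (H 4 i))"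
    define P :: int where "P = 2 ^ ((r + 2) div 2)"
    have hi: "\<And>i. i \<in> {1..4} \<Longrightarrow> hyp_i r (H 1 i) (H 2 i) (H 3 i) (H 4 i)" using hy by blast
    have d4: "\<And>i j. i \<in> {1..4} \<Longrightarrow> j \<in> {1..4} \<Longrightarrow> i \<noteq> j \<Longrightarrow> wsupp r (H 4 i) \<inter> wsupp r (H 4 j) = {}"
      using hy by blast
    have sp: "\<And>p i. p \<in> {1..3} \<Longrightarrow> i \<in> {1..4} \<Longrightarrow> wsupp r (H p i) = wsupp r (H p 1)"
      using hy by blast
    have sx: "\<And>p u. p \<in> {1..3} \<Longrightarrow> u \<in> wsupp r (H p 1) \<Longrightarrow>
                 wdual r (H p 1) u \<oplus> wdual r (H p 2) u \<oplus> wdual r (H p 3) u \<oplus> wdual r (H p 4) u"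
      using hy by blast
    have key: "\<And>i u c d. i \<in> {1..4} \<Longrightarrow> length u = r \<Longrightarrow>
      (\<bar>walsh (r+2) (F i) (u @ [c,d])\<bar> = 2*P \<longleftrightarrow> walsh r (H 4 i) u \<noteq> 0)
    \<and> (\<bar>walsh (r+2) (F i) (u @ [c,d])\<bar> = P \<longleftrightarrow> walsh r (H 1 i) u \<noteq> 0 \<or> walsh r (H 2 i) u \<noteq> 0 \<or> walsh r (H 3 i) u \<noteq> 0)
    \<and> (walsh r (H 1 i) u \<noteq> 0 \<longrightarrow> (walsh (r+2) (F i) (u @ [c,d]) < 0 \<longleftrightarrow> walsh r (H 1 i) u < 0))
    \<and> (walsh r (H 2 i) u \<noteq> 0 \<longrightarrow> (walsh (r+2) (F i) (u @ [c,d]) < 0 \<longleftrightarrow> (d \<oplus> (walsh r (H 2 i) u < 0))))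
    \<and> (walsh r (H 3 i) u \<noteq> 0 \<longrightarrow> (walsh (r+2) (F i) (u @ [c,d]) < 0 \<longleftrightarrow> (c \<oplus> (walsh r (H 3 i) u < 0))))"
      unfolding F_def P_def using comp_props[OF hi] by blast
    have wi: "\<And>p i u. p \<in> {1..3} \<Longrightarrow> i \<in> {1..4} \<Longrightarrow> length u = r \<Longrightarrow>
        (walsh r (H p i) u \<noteq> 0 \<longleftrightarrow> walsh r (H p 1) u \<noteq> 0)"
    proof -
      fix p i :: nat and u :: "bool list"
      assume p: "p \<in> {1..3}" and i: "i \<in> {1..4}" and lu: "length u = r"
      have "u \<in> wsupp r (H p i) \<longleftrightarrow> u \<in> wsupp r (H p 1)" using sp[OF p i] by simp
      then show "walsh r (H p i) u \<noteq> 0 \<longleftrightarrow> walsh r (H p 1) u \<noteq> 0"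
        using lu by (simp add: wsupp_def vecs_def)
    qed
    have A: "\<forall>i\<in>{1..4}. \<forall>j\<in>{1..4}. i \<noteq> j \<longrightarrow>
       {w\<in>vecs (r+2). \<bar>walsh (r+2) (F i) w\<bar> = 2*P} \<inter> {w\<in>vecs (r+2). \<bar>walsh (r+2) (F j) w\<bar> = 2*P} = {}"
    proof (intro ballI impI)
      fix i j :: nat assume i: "i \<in> {1..4}" and j: "j \<in> {1..4}" and ij: "i \<noteq> j"
      show "{w\<in>vecs (r+2). \<bar>walsh (r+2) (F i) w\<bar> = 2*P} \<inter> {w\<in>vecs (r+2). \<bar>walsh (r+2) (F j) w\<bar> = 2*P} = {}"
      proof (rule ccontr)
        assume "{w\<in>vecs (r+2). \<bar>walsh (r+2) (F i) w\<bar> = 2*P} \<inter> {w\<in>vecs (r+2). \<bar>walsh (r+2) (F j) w\<bar> = 2*P} \<noteq> {}"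
        then obtain w where w: "w \<in> vecs (r+2)" "\<bar>walsh (r+2) (F i) w\<bar> = 2*P" "\<bar>walsh (r+2) (F j) w\<bar> = 2*P"
          by blast
        obtain u c d where u: "length u = r" "w = u @ [c, d]" using split_vec[OF w(1)] by blast
        have "walsh r (H 4 i) u \<noteq> 0" "walsh r (H 4 j) u \<noteq> 0"
          using key[OF i u(1), of c d] key[OF j u(1), of c d] w u(2) by auto
        then have "u \<in> wsupp r (H 4 i) \<inter> wsupp r (H 4 j)" using u(1) by (simp add: wsupp_def vecs_def)
        then show False using d4[OF i j ij] by blast
      qed
    qed
    define S where "S = {w\<in>vecs (r+2). \<bar>walsh (r+2) (F 1) w\<bar> = P}"
    have B1: "\<forall>i\<in>{1..4}. {w\<in>vecs (r+2). \<bar>walsh (r+2) (F i) w\<bar> = P} = S"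
    proof (intro ballI set_eqI)
      fix i w assume i: "i \<in> {1..4::nat}"
      have one: "(1::nat) \<in> {1..4}" by simp
      show "w \<in> {w\<in>vecs (r+2). \<bar>walsh (r+2) (F i) w\<bar> = P} \<longleftrightarrow> w \<in> S"
      proof (cases "w \<in> vecs (r+2)")
        case True
        obtain u c d where u: "length u = r" "w = u @ [c, d]" using split_vec[OF True] by blast
        have p: "(1::nat) \<in> {1..3}" "(2::nat) \<in> {1..3}" "(3::nat) \<in> {1..3}" by simp_all
        show ?thesis unfolding S_def using True key[OF i u(1), of c d] key[OF one u(1), of c d]
          wi[OF p(1) i u(1)] wi[OF p(2) i u(1)] wi[OF p(3) i u(1)] u(2) by auto
      qed (simp add: S_def)
    qed
    have B2: "\<forall>w\<in>S. wdual (r+2) (F 1) w \<oplus> wdual (r+2) (F 2) w \<oplus> wdual (r+2) (F 3) w \<oplus> wdual (r+2) (F 4) w"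
    proof
      fix w assume "w \<in> S"
      then have w: "w \<in> vecs (r+2)" "\<bar>walsh (r+2) (F 1) w\<bar> = P" by (auto simp: S_def)
      obtain u c d where u: "length u = r" "w = u @ [c, d]" using split_vec[OF w(1)] by blast
      have I: "(1::nat) \<in> {1..4}" "(2::nat) \<in> {1..4}" "(3::nat) \<in> {1..4}" "(4::nat) \<in> {1..4}" by simp_all
      have p: "(1::nat) \<in> {1..3}" "(2::nat) \<in> {1..3}" "(3::nat) \<in> {1..3}" by simp_all
      have "walsh r (H 1 1) u \<noteq> 0 \<or> walsh r (H 2 1) u \<noteq> 0 \<or> walsh r (H 3 1) u \<noteq> 0"
        using key[OF I(1) u(1), of c d] w(2) u(2) by simp
      then show "wdual (r+2) (F 1) w \<oplus> wdual (r+2) (F 2) w \<oplus> wdual (r+2) (F 3) w \<oplus> wdual (r+2) (F 4) w"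
      proof (elim disjE)
        assume nz: "walsh r (H 1 1) u \<noteq> 0"
        then have us: "u \<in> wsupp r (H 1 1)" using u(1) by (simp add: wsupp_def vecs_def)
        have nzi: "\<And>i. i \<in> {1..4} \<Longrightarrow> walsh r (H 1 i) u \<noteq> 0" using wi[OF p(1) _ u(1)] nz by blast
        have dd: "\<And>i. i \<in> {1..4} \<Longrightarrow> wdual (r+2) (F i) w = wdual r (H 1 i) u"
          unfolding wdual_def u(2) using key[OF _ u(1)] nzi by blast
        show ?thesis using sx[OF p(1) us] dd[OF I(1)] dd[OF I(2)] dd[OF I(3)] dd[OF I(4)] by simp
      next
        assume nz: "walsh r (H 2 1) u \<noteq> 0"
        then have us: "u \<in> wsupp r (H 2 1)" using u(1) by (simp add: wsupp_def vecs_def)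
        have nzi: "\<And>i. i \<in> {1..4} \<Longrightarrow> walsh r (H 2 i) u \<noteq> 0" using wi[OF p(2) _ u(1)] nz by blast
        have dd: "\<And>i. i \<in> {1..4} \<Longrightarrow> wdual (r+2) (F i) w = (d \<oplus> wdual r (H 2 i) u)"
          unfolding wdual_def u(2) using key[OF _ u(1)] nzi by blast
        show ?thesis using sx[OF p(2) us] dd[OF I(1)] dd[OF I(2)] dd[OF I(3)] dd[OF I(4)]
          by (simp add: bxor_def) blast
      next
        assume nz: "walsh r (H 3 1) u \<noteq> 0"
        then have us: "u \<in> wsupp r (H 3 1)" using u(1) by (simp add: wsupp_def vecs_def)
        have nzi: "\<And>i. i \<in> {1..4} \<Longrightarrow> walsh r (H 3 i) u \<noteq> 0" using wi[OF p(3) _ u(1)] nz by blast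
        have dd: "\<And>i. i \<in> {1..4} \<Longrightarrow> wdual (r+2) (F i) w = (c \<oplus> wdual r (H 3 i) u)"
          unfolding wdual_def u(2) using key[OF _ u(1)] nzi by blast
        show ?thesis using sx[OF p(3) us] dd[OF I(1)] dd[OF I(2)] dd[OF I(3)] dd[OF I(4)]
          by (simp add: bxor_def) blast
      qed
    qed
    have P2: "(2::int) ^ ((r + 2 + 2) div 2) = 2 * P" unfolding P_def e4 by simp
    show "let n = r + 2;
            F = (\<lambda>i. compose_f r (H 1 i) (H 2 i) (H 3 i) (H 4 i));
            S1 = (\<lambda>i. {w\<in>vecs n. \<bar>walsh n (F i) w\<bar> = 2 ^ ((n + 2) div 2)});
            S2 = (\<lambda>i. {w\<in>vecs n. \<bar>walsh n (F i) w\<bar> = 2 ^ (n div 2)})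
        in (\<forall>i\<in>{1..4}. \<forall>j\<in>{1..4}. i \<noteq> j \<longrightarrow> S1 i \<inter> S1 j = {})
           \<and> (\<exists>S. (\<forall>i\<in>{1..4}. S2 i = S)
                \<and> (\<forall>w\<in>S. wdual n (F 1) w \<oplus> wdual n (F 2) w \<oplus> wdual n (F 3) w \<oplus> wdual n (F 4) w))"
      unfolding Let_def F_def[symmetric] P2 P_def[symmetric]
      using A B1 B2 by blast
  qed
  show ?thesis using part1 part2 by blast
qed

end
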